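(* For any $\alpha>0$ and $\epsilon>0$, there is no $\epsilon$-differentially private (central model) $(\alpha, 0.01m^2)$-approximation algorithm for rank aggregation when $n=o(m/\epsilon)$.
   Context: Items are $[m]=\{1,\dots,m\}$; $\mathbb{S}_m$ is the set of rankings (permutations) of $[m]$, $\pi(j)$ being the position of item $j$. The Kendall tau distance is $K(\pi_1,\pi_2)=|\{(i,j):\pi_1(i)<\pi_1(j),\ \pi_2(i)>\pi_2(j)\}|$. An input is a list $\Pi=\{\pi_1,\dots,\pi_n\}$ of $n$ rankings. Define $\bar K(\sigma,\Pi)=\frac1n\sum_k K(\sigma,\pi_k)$ and $\mathrm{OPT}(\Pi)=\min_\sigma\bar K(\sigma,\Pi)$. A randomized algorithm is an $(\alpha,\beta)$-approximation algorithm if for every input $\Pi$ its output $\sigma$ satisfies $\mathbb{E}[\bar K(\sigma,\Pi)]\le\alpha\,\mathrm{OPT}(\Pi)+\beta$. Two inputs are neighboring if they differ in a single ranking; an algorithm $\mathcal{M}$ is $\epsilon$-DP (central model) if for all neighboring $\Pi,\Pi'$ and all output sets $S$, $\Pr[\mathcal{M}(\Pi)\in S]\le e^{\epsilon}\Pr[\mathcal{M}(\Pi')\in S]$. *)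

theory Defs
  imports "HOL-Probability.Probability" "HOL-Combinatorics.Permutations"
begin

text \<open>A ranking of the items [m] = {1..m} is a permutation pi of {1..m};
  pi j is the position of item j (identity outside {1..m}).\<close>
definition rankings :: "nat \<Rightarrow> (nat \<Rightarrow> nat) set" where
  "rankings m = {\<pi>. \<pi> permutes {1..m}}"

definition kendall :: "nat \<Rightarrow> (nat \<Rightarrow> nat) \<Rightarrow> (nat \<Rightarrow> nat) \<Rightarrow> nat" where
  "kendall m \<pi>1 \<pi>2 =
     card {(i, j). i \<in> {1..m} \<and> j \<in> {1..m} \<and> \<pi>1 i < \<pi>1 j \<and> \<pi>2 i > \<pi>2 j}"

definition avg_kendall :: "nat \<Rightarrow> (nat \<Rightarrow> nat) \<Rightarrow> (nat \<Rightarrow> nat) list \<Rightarrow> real" where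
  "avg_kendall m \<sigma> Ps = (\<Sum>\<pi>\<leftarrow>Ps. real (kendall m \<sigma> \<pi>)) / real (length Ps)"

definition OPT :: "nat \<Rightarrow> (nat \<Rightarrow> nat) list \<Rightarrow> real" where
  "OPT m Ps = Min ((\<lambda>\<sigma>. avg_kendall m \<sigma> Ps) ` rankings m)"

definition valid_input :: "nat \<Rightarrow> nat \<Rightarrow> (nat \<Rightarrow> nat) list \<Rightarrow> bool" where
  "valid_input m n Ps \<longleftrightarrow> length Ps = n \<and> set Ps \<subseteq> rankings m"

definition neighboring :: "(nat \<Rightarrow> nat) list \<Rightarrow> (nat \<Rightarrow> nat) list \<Rightarrow> bool" where
  "neighboring Ps Ps' \<longleftrightarrow> length Ps = length Ps' \<and>
     card {k. k < length Ps \<and> Ps ! k \<noteq> Ps' ! k} \<le> 1"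

definition is_DP :: "nat \<Rightarrow> nat \<Rightarrow> real \<Rightarrow> ((nat \<Rightarrow> nat) list \<Rightarrow> (nat \<Rightarrow> nat) pmf) \<Rightarrow> bool" where
  "is_DP m n \<epsilon> A \<longleftrightarrow>
     (\<forall>Ps Ps'. valid_input m n Ps \<and> valid_input m n Ps' \<and> neighboring Ps Ps' \<longrightarrow>
        (\<forall>S. measure_pmf.prob (A Ps) S \<le> exp \<epsilon> * measure_pmf.prob (A Ps') S))"

definition is_approx :: "nat \<Rightarrow> nat \<Rightarrow> real \<Rightarrow> real \<Rightarrow> ((nat \<Rightarrow> nat) list \<Rightarrow> (nat \<Rightarrow> nat) pmf) \<Rightarrow> bool" where
  "is_approx m n \<alpha> \<beta> A \<longleftrightarrow>
     (\<forall>Ps. valid_input m n Ps \<longrightarrow>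
        set_pmf (A Ps) \<subseteq> rankings m \<and>
        measure_pmf.expectation (A Ps) (\<lambda>\<sigma>. avg_kendall m \<sigma> Ps) \<le> \<alpha> * OPT m Ps + \<beta>)"

end

theory Submission imports Defs begin

lemma finite_rankings: "finite (rankings m)"
  unfolding rankings_def by (rule finite_permutations) simp

lemma id_rankings: "id \<in> rankings m"
  unfolding rankings_def by (simp add: permutes_id)

lemma score_perm:
  fixes g :: "nat \<Rightarrow> nat"
  assumes inj: "inj_on g {1..m}"
  shows "\<exists>\<pi>\<in>rankings m. \<forall>i\<in>{1..m}. \<forall>j\<in>{1..m}. g i < g j \<longrightarrow> \<pi> i < \<pi> j"
proof -
  define \<pi> where "\<pi> i = (if i \<in> {1..m} then card {j\<in>{1..m}. g j < g i} + 1 else i)" for i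
  have mono: "\<pi> i < \<pi> j" if "i \<in> {1..m}" "j \<in> {1..m}" "g i < g j" for i j
  proof -
    have "{k\<in>{1..m}. g k < g i} \<subset> {k\<in>{1..m}. g k < g j}"
      using that by auto
    then have "card {k\<in>{1..m}. g k < g i} < card {k\<in>{1..m}. g k < g j}"
      by (rule psubset_card_mono[rotated]) simp
    then show ?thesis using that by (simp add: \<pi>_def)
  qed
  have injp: "inj_on \<pi> {1..m}"
  proof (rule inj_onI)
    fix i j assume "i \<in> {1..m}" "j \<in> {1..m}" "\<pi> i = \<pi> j"
    then show "i = j" using mono[of i j] mono[of j i] inj_onD[OF inj, of i j]
      by (metis less_irrefl nat_neq_iff)
  qed
  have range: "\<pi> ` {1..m} \<subseteq> {1..m}"
  proof
    fix x assume "x \<in> \<pi> ` {1..m}"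
    then obtain i where i: "i \<in> {1..m}" "x = \<pi> i" by auto
    have "{k\<in>{1..m}. g k < g i} \<subseteq> {1..m} - {i}" by auto
    then have "card {k\<in>{1..m}. g k < g i} \<le> card ({1..m} - {i})" by (intro card_mono) auto
    also have "\<dots> = m - 1" using i by simp
    finally have c: "card {k\<in>{1..m}. g k < g i} \<le> m - 1" .
    have "\<pi> i = card {k\<in>{1..m}. g k < g i} + 1" using i by (simp add: \<pi>_def)
    then show "x \<in> {1..m}" using i c by auto
  qed
  have "\<pi> ` {1..m} = {1..m}" by (rule endo_inj_surj) (use injp range in auto)
  then have "bij_betw \<pi> {1..m} {1..m}" using injp by (simp add: bij_betw_def)
  then have "\<pi> permutes {1..m}" by (rule bij_imp_permutes) (auto simp: \<pi>_def)
  then show ?thesis using mono unfolding rankings_def by blast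
qed

lemma kendall_self: "kendall m \<pi> \<pi> = 0"
  unfolding kendall_def by (auto simp: card_eq_0_iff)

lemma avg_rep: "n \<ge> 1 \<Longrightarrow> avg_kendall m \<sigma> (replicate n \<pi>) = real (kendall m \<sigma> \<pi>)"
  unfolding avg_kendall_def by (simp add: sum_list_replicate)

lemma OPT_rep: assumes "n \<ge> 1" "\<pi> \<in> rankings m" shows "OPT m (replicate n \<pi>) = 0"
  unfolding OPT_def avg_rep[OF assms(1)]
proof (rule Min_eqI)
  show "0 \<in> (\<lambda>\<sigma>. real (kendall m \<sigma> \<pi>)) ` rankings m"
    using assms(2) by (intro image_eqI[where x=\<pi>]) (simp_all add: kendall_self)
qed (use finite_rankings in auto)

lemma prob_sum:
  assumes "set_pmf M \<subseteq> R" "finite R"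
  shows "measure_pmf.prob M S = (\<Sum>a\<in>R. indicator S a * pmf M a)"
proof -
  have "measure_pmf.prob M S = measure_pmf.expectation M (indicator S)" by simp
  also have "\<dots> = (\<Sum>a\<in>R. indicator S a * pmf M a)"
    by (rule integral_measure_pmf_real) (use assms in auto)
  finally show ?thesis .
qed

lemma exp_sum:
  assumes "set_pmf M \<subseteq> R" "finite R"
  shows "measure_pmf.expectation M f = (\<Sum>a\<in>R. f a * pmf M a)"
  by (rule integral_measure_pmf_real) (use assms in auto)


lemma markov:
  assumes ap: "is_approx m n \<alpha> (0.01 * real m ^ 2) A" and n: "n \<ge> 1"
    and \<pi>: "\<pi> \<in> rankings m" and m: "m \<ge> 1"
  shows "measure_pmf.prob (A (replicate n \<pi>)) {\<sigma>. real (kendall m \<sigma> \<pi>) \<le> 0.02 * real m ^ 2} \<ge> 1/2"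
proof -
  let ?M = "A (replicate n \<pi>)"
  let ?E = "{\<sigma>. real (kendall m \<sigma> \<pi>) \<le> 0.02 * real m ^ 2}"
  let ?R = "rankings m"
  define d :: real where "d = 0.02 * real m ^ 2"
  have d: "d > 0" using m by (simp add: d_def)
  have vi: "valid_input m n (replicate n \<pi>)" using \<pi> by (simp add: valid_input_def set_replicate_conv_if)
  from ap vi have supp: "set_pmf ?M \<subseteq> ?R"
    and ex: "measure_pmf.expectation ?M (\<lambda>\<sigma>. avg_kendall m \<sigma> (replicate n \<pi>)) \<le> \<alpha> * OPT m (replicate n \<pi>) + 0.01 * real m ^ 2"
    unfolding is_approx_def by blast+
  have ex2: "(\<Sum>a\<in>?R. real (kendall m a \<pi>) * pmf ?M a) \<le> d / 2"
    using ex unfolding avg_rep[OF n] OPT_rep[OF n \<pi>] exp_sum[OF supp finite_rankings] d_def by simp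
  have "(\<Sum>a\<in>?R. (1 - indicator ?E a) * pmf ?M a * d) \<le> (\<Sum>a\<in>?R. real (kendall m a \<pi>) * pmf ?M a)"
  proof (rule sum_mono)
    fix a assume "a \<in> ?R"
    show "(1 - indicator ?E a) * pmf ?M a * d \<le> real (kendall m a \<pi>) * pmf ?M a"
    proof (cases "a \<in> ?E")
      case True then show ?thesis by simp
    next
      case False
      then have "d \<le> real (kendall m a \<pi>)" by (simp add: d_def)
      then have "d * pmf ?M a \<le> real (kendall m a \<pi>) * pmf ?M a"
        by (rule mult_right_mono) simp
      then show ?thesis using False by (simp add: mult.commute[of _ d])
    qed
  qed
  also have "(\<Sum>a\<in>?R. (1 - indicator ?E a) * pmf ?M a * d) =
      ((\<Sum>a\<in>?R. pmf ?M a) - (\<Sum>a\<in>?R. indicator ?E a * pmf ?M a)) * d"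
    by (simp add: sum_distrib_right sum_subtractf left_diff_distrib)
  also have "(\<Sum>a\<in>?R. pmf ?M a) = 1" using supp finite_rankings by (rule sum_pmf_eq_1[rotated])
  also have "(\<Sum>a\<in>?R. indicator ?E a * pmf ?M a) = measure_pmf.prob ?M ?E"
    using prob_sum[OF supp finite_rankings] by simp
  finally have "(1 - measure_pmf.prob ?M ?E) * d \<le> d / 2" using ex2 by linarith
  then show ?thesis using d by (simp add: field_simps)
qed

lemma group_priv:
  assumes dp: "is_DP m n \<epsilon> A" and \<epsilon>: "\<epsilon> \<ge> 0" and \<rho>: "\<rho> \<in> rankings m" and \<pi>: "\<pi> \<in> rankings m"
  shows "measure_pmf.prob (A (replicate n \<pi>)) S \<le> exp (real n * \<epsilon>) * measure_pmf.prob (A (replicate n \<rho>)) S"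
proof -
  define L where "L i = map (\<lambda>k. if k < i then \<rho> else \<pi>) [0..<n]" for i
  have vL: "valid_input m n (L i)" for i using \<rho> \<pi> by (auto simp: L_def valid_input_def)
  have nb: "neighboring (L i) (L (Suc i))" for i
  proof -
    have "{k. k < length (L i) \<and> L i ! k \<noteq> L (Suc i) ! k} \<subseteq> {i}" by (auto simp: L_def)
    then have "card {k. k < length (L i) \<and> L i ! k \<noteq> L (Suc i) ! k} \<le> card {i}"
      by (rule card_mono[rotated]) simp
    then show ?thesis by (simp add: neighboring_def L_def)
  qed
  have step: "measure_pmf.prob (A (L 0)) S \<le> exp (real i * \<epsilon>) * measure_pmf.prob (A (L i)) S" for i
  proof (induction i)
    case 0 then show ?case by simp
  next
    case (Suc i)
    have "measure_pmf.prob (A (L i)) S \<le> exp \<epsilon> * measure_pmf.prob (A (L (Suc i))) S"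
      using dp vL nb unfolding is_DP_def by blast
    then have "exp (real i * \<epsilon>) * measure_pmf.prob (A (L i)) S \<le> exp (real i * \<epsilon>) * (exp \<epsilon> * measure_pmf.prob (A (L (Suc i))) S)"
      by (intro mult_left_mono) auto
    also have "\<dots> = exp (real (Suc i) * \<epsilon>) * measure_pmf.prob (A (L (Suc i))) S"
      by (simp add: distrib_right exp_add)
    finally show ?case using Suc.IH by linarith
  qed
  have "L 0 = replicate n \<pi>" "L n = replicate n \<rho>" by (auto simp: L_def intro!: nth_equalityI)
  then show ?thesis using step[of n] by simp
qed


definition gsc :: "nat \<Rightarrow> nat set \<Rightarrow> nat \<Rightarrow> nat" where
  "gsc m S i = (if i \<le> m div 2 then (if i \<in> S then 2*m+i else i) else m + i)"

definition piS :: "nat \<Rightarrow> nat set \<Rightarrow> nat \<Rightarrow> nat" where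
  "piS m S = (SOME \<pi>. \<pi> \<in> rankings m \<and> (\<forall>i\<in>{1..m}. \<forall>j\<in>{1..m}. gsc m S i < gsc m S j \<longrightarrow> \<pi> i < \<pi> j))"

lemma gsc_inj: "inj_on (gsc m S) {1..m}"
  unfolding inj_on_def gsc_def by (auto split: if_splits)

lemma piS_ex: "piS m S \<in> rankings m \<and> (\<forall>i\<in>{1..m}. \<forall>j\<in>{1..m}. gsc m S i < gsc m S j \<longrightarrow> piS m S i < piS m S j)"
proof -
  have "\<exists>\<pi>. \<pi> \<in> rankings m \<and> (\<forall>i\<in>{1..m}. \<forall>j\<in>{1..m}. gsc m S i < gsc m S j \<longrightarrow> \<pi> i < \<pi> j)"
    using score_perm[OF gsc_inj, of m S] by blast
  then show ?thesis unfolding piS_def by (rule someI_ex)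
qed

lemma piS_rank: "piS m S \<in> rankings m"
  using piS_ex by blast

lemma piS_in:
  assumes "j \<in> {1..m div 2}" "f \<in> {m div 2 + 1..m}" "j \<in> S"
  shows "piS m S f < piS m S j"
proof -
  have "gsc m S f < gsc m S j" using assms by (auto simp: gsc_def)
  then show ?thesis using piS_ex[of m S] assms by auto
qed

lemma piS_out:
  assumes "j \<in> {1..m div 2}" "f \<in> {m div 2 + 1..m}" "j \<notin> S"
  shows "piS m S j < piS m S f"
proof -
  have "gsc m S j < gsc m S f" using assms by (auto simp: gsc_def)
  then show ?thesis using piS_ex[of m S] assms by auto
qed

definition Tset :: "nat \<Rightarrow> (nat \<Rightarrow> nat) \<Rightarrow> nat set" where
  "Tset m \<sigma> = {j\<in>{1..m div 2}. 2 * card {f\<in>{m div 2 + 1..m}. \<sigma> j < \<sigma> f} \<le> m - m div 2}"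


lemma kendall_lb:
  assumes \<sigma>: "\<sigma> \<in> rankings m" and S: "S \<subseteq> {1..m div 2}"
  shows "real (card ((S - Tset m \<sigma>) \<union> (Tset m \<sigma> - S))) * real (m - m div 2)
           \<le> 2 * real (kendall m \<sigma> (piS m S))"
proof -
  define p where "p = m div 2"
  define T where "T = Tset m \<sigma>"
  define D where "D = (S - T) \<union> (T - S)"
  define Fx where "Fx = {p + 1..m}"
  define \<pi> where "\<pi> = piS m S"
  define X where "X j = (if j \<in> S then (\<lambda>f. (j, f)) ` {f\<in>Fx. \<sigma> j < \<sigma> f}
                         else (\<lambda>f. (f, j)) ` {f\<in>Fx. \<sigma> f < \<sigma> j})" for j
  define K where "K = {(i, j). i \<in> {1..m} \<and> j \<in> {1..m} \<and> \<sigma> i < \<sigma> j \<and> \<pi> i > \<pi> j}"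
  have T: "T \<subseteq> {1..p}" by (auto simp: T_def Tset_def p_def)
  have D: "D \<subseteq> {1..p}" using S T by (auto simp: D_def p_def)
  have inj\<sigma>: "inj \<sigma>" using \<sigma> by (auto simp: rankings_def permutes_inj)
  have sub: "(\<Union>j\<in>D. X j) \<subseteq> K"
  proof
    fix x assume "x \<in> (\<Union>j\<in>D. X j)"
    then obtain j where j: "j \<in> D" "x \<in> X j" by auto
    have jP: "j \<in> {1..m div 2}" using j D by (auto simp: p_def)
    show "x \<in> K"
    proof (cases "j \<in> S")
      case True
      then obtain f where f: "f \<in> Fx" "\<sigma> j < \<sigma> f" "x = (j, f)" using j by (auto simp: X_def)
      have "\<pi> f < \<pi> j" using piS_in[OF jP _ True, of f] f by (simp add: \<pi>_def Fx_def p_def)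
      then show ?thesis using f jP by (auto simp: K_def Fx_def)
    next
      case False
      then obtain f where f: "f \<in> Fx" "\<sigma> f < \<sigma> j" "x = (f, j)" using j by (auto simp: X_def)
      have "\<pi> j < \<pi> f" using piS_out[OF jP _ False, of f] f by (simp add: \<pi>_def Fx_def p_def)
      then show ?thesis using f jP by (auto simp: K_def Fx_def)
    qed
  qed
  have finK: "finite K" by (rule finite_subset[of _ "{1..m} \<times> {1..m}"]) (auto simp: K_def)
  have finX: "finite (X j)" for j by (auto simp: X_def Fx_def)
  have disj: "X i \<inter> X j = {}" if "i \<in> D" "j \<in> D" "i \<noteq> j" for i j
    using that D by (auto simp: X_def Fx_def split: if_splits)
  have cardX: "real (m - p) \<le> 2 * real (card (X j))" if "j \<in> D" for j
  proof -
    have jP: "j \<in> {1..p}" using that D by auto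
    define A1 where "A1 = {f\<in>Fx. \<sigma> j < \<sigma> f}"
    define A2 where "A2 = {f\<in>Fx. \<sigma> f < \<sigma> j}"
    have cF: "card Fx = m - p" by (simp add: Fx_def)
    have "Fx \<subseteq> A1 \<union> A2"
    proof
      fix f assume f: "f \<in> Fx"
      then have "f \<noteq> j" using jP by (auto simp: Fx_def)
      then have "\<sigma> f \<noteq> \<sigma> j" using inj\<sigma> by (auto dest: injD)
      then show "f \<in> A1 \<union> A2" using f by (auto simp: A1_def A2_def)
    qed
    then have "card Fx \<le> card (A1 \<union> A2)" by (intro card_mono) (auto simp: A1_def A2_def Fx_def)
    also have "\<dots> \<le> card A1 + card A2" by (rule card_Un_le)
    finally have sum12: "m - p \<le> card A1 + card A2" using cF by simp
    have c1: "card ((\<lambda>f. (j, f)) ` A1) = card A1" by (rule card_image) (auto simp: inj_on_def)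
    have c2: "card ((\<lambda>f. (f, j)) ` A2) = card A2" by (rule card_image) (auto simp: inj_on_def)
    have Tj: "j \<in> T \<longleftrightarrow> 2 * card A1 \<le> m - p"
      using jP by (simp add: T_def Tset_def A1_def Fx_def p_def)
    show ?thesis
    proof (cases "j \<in> S")
      case True
      then have "j \<notin> T" using that by (auto simp: D_def)
      then have "m - p < 2 * card A1" using Tj by simp
      then show ?thesis using True c1 by (simp add: X_def A1_def)
    next
      case False
      then have "j \<in> T" using that by (auto simp: D_def)
      then have "m - p \<le> 2 * card A2" using Tj sum12 by simp
      then show ?thesis using False c2 by (simp add: X_def A2_def)
    qed
  qed
  have "real (card D) * real (m - p) = (\<Sum>j\<in>D. real (m - p))" by simp
  also have "\<dots> \<le> (\<Sum>j\<in>D. 2 * real (card (X j)))" by (rule sum_mono) (rule cardX)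
  also have "\<dots> = 2 * real (\<Sum>j\<in>D. card (X j))" by (simp add: sum_distrib_left)
  also have "(\<Sum>j\<in>D. card (X j)) = card (\<Union>j\<in>D. X j)"
    by (rule card_UN_disjoint[symmetric]) (use D finX disj in \<open>auto intro: finite_subset\<close>)
  also have "card (\<Union>j\<in>D. X j) \<le> card K" by (rule card_mono[OF finK sub])
  finally show ?thesis by (simp add: D_def T_def p_def K_def \<pi>_def kendall_def)
qed


lemma sum_pow_card: "finite P \<Longrightarrow> (\<Sum>U\<in>Pow P. (1/3::real) ^ card U) = (4/3) ^ card P"
proof -
  assume P: "finite P"
  have "(\<Prod>x\<in>P. (\<lambda>_. 1/3::real) x + (\<lambda>_. 1) x) = (\<Sum>X\<in>Pow P. prod (\<lambda>_. 1/3::real) X * prod (\<lambda>_. 1) (P - X))"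
    by (rule prod_add[OF P])
  then show ?thesis by simp
qed

lemma count_bound:
  assumes \<sigma>: "\<sigma> \<in> rankings m" and m: "m \<ge> 1"
  shows "(\<Sum>S\<in>Pow {1..m div 2}. indicator {\<sigma>. real (kendall m \<sigma> (piS m S)) \<le> 0.02 * real m ^ 2} \<sigma>)
           \<le> 3 powr (0.08 * real m) * (4/3) ^ (m div 2)"
proof -
  define P where "P = {1..m div 2}"
  define T where "T = Tset m \<sigma>"
  have T: "T \<subseteq> P" by (auto simp: T_def Tset_def P_def)
  define C :: real where "C = 3 powr (0.08 * real m)"
  have pt: "indicator {\<sigma>. real (kendall m \<sigma> (piS m S)) \<le> 0.02 * real m ^ 2} \<sigma>
              \<le> C * (1/3) ^ card ((S - T) \<union> (T - S))" if S: "S \<in> Pow P" for S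
  proof (cases "real (kendall m \<sigma> (piS m S)) \<le> 0.02 * real m ^ 2")
    case True
    let ?c = "real (card ((S - T) \<union> (T - S)))"
    have lb: "?c * real (m - m div 2) \<le> 2 * real (kendall m \<sigma> (piS m S))"
      using kendall_lb[OF \<sigma>, of S] S by (simp add: P_def T_def)
    have "real m \<le> 2 * real (m - m div 2)" by linarith
    then have "?c * real m \<le> ?c * (2 * real (m - m div 2))" by (intro mult_left_mono) auto
    also have "\<dots> \<le> 4 * real (kendall m \<sigma> (piS m S))" using lb by linarith
    also have "\<dots> \<le> 0.08 * real m * real m" using True by (simp add: power2_eq_square)
    finally have "?c * real m \<le> (0.08 * real m) * real m" .
    then have cle: "?c \<le> 0.08 * real m" using m by (simp add: mult_le_cancel_right)
    have "(3::real) ^ card ((S - T) \<union> (T - S)) = 3 powr ?c" by (simp add: powr_realpow)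
    also have "\<dots> \<le> C" unfolding C_def by (rule powr_mono[OF cle]) simp
    finally have "1 \<le> C * (1/3) ^ card ((S - T) \<union> (T - S))"
      by (simp add: power_one_over field_simps)
    then show ?thesis using True by simp
  next
    case False
    have "C \<ge> 0" by (simp add: C_def)
    then show ?thesis using False by simp
  qed
  have "(\<Sum>S\<in>Pow P. indicator {\<sigma>. real (kendall m \<sigma> (piS m S)) \<le> 0.02 * real m ^ 2} \<sigma>)
        \<le> (\<Sum>S\<in>Pow P. C * (1/3) ^ card ((S - T) \<union> (T - S)))"
    by (rule sum_mono) (rule pt)
  also have "\<dots> = C * (\<Sum>S\<in>Pow P. (1/3) ^ card ((S - T) \<union> (T - S)))" by (simp add: sum_distrib_left)
  also have "(\<Sum>S\<in>Pow P. (1/3::real) ^ card ((S - T) \<union> (T - S))) = (\<Sum>U\<in>Pow P. (1/3) ^ card U)"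
    by (rule sum.reindex_bij_witness[where i = "\<lambda>U. (U - T) \<union> (T - U)" and j = "\<lambda>U. (U - T) \<union> (T - U)"])
       (use T in auto)
  also have "\<dots> = (4/3) ^ card P" by (rule sum_pow_card) (simp add: P_def)
  finally show ?thesis by (simp add: P_def C_def)
qed


lemma main_bound:
  assumes m: "m \<ge> 2" and n: "n \<ge> 1" and \<epsilon>: "\<epsilon> > 0"
    and dp: "is_DP m n \<epsilon> A" and ap: "is_approx m n \<alpha> (0.01 * real m ^ 2) A"
  shows "0.025 * real m - 2 \<le> real n * \<epsilon>"
proof -
  define p where "p = m div 2"
  define P where "P = {1..p}"
  define E where "E S = {\<sigma>. real (kendall m \<sigma> (piS m S)) \<le> 0.02 * real m ^ 2}" for S
  define M0 where "M0 = A (replicate n id)"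
  define B :: real where "B = 3 powr (0.08 * real m) * (4/3) ^ p"
  let ?R = "rankings m"
  have vi: "valid_input m n (replicate n id)" using id_rankings[of m]
    by (simp add: valid_input_def set_replicate_conv_if)
  have supp: "set_pmf M0 \<subseteq> ?R" using ap vi unfolding is_approx_def M0_def by blast
  have hS: "1/2 \<le> exp (real n * \<epsilon>) * measure_pmf.prob M0 (E S)" if "S \<in> Pow P" for S
  proof -
    have "1/2 \<le> measure_pmf.prob (A (replicate n (piS m S))) (E S)"
      unfolding E_def by (rule markov[OF ap n piS_rank]) (use m in simp)
    also have "\<dots> \<le> exp (real n * \<epsilon>) * measure_pmf.prob M0 (E S)"
      unfolding M0_def by (rule group_priv[OF dp _ id_rankings piS_rank]) (use \<epsilon> in simp)
    finally show ?thesis .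
  qed
  have "(\<Sum>S\<in>Pow P. (1/2::real)) \<le> (\<Sum>S\<in>Pow P. exp (real n * \<epsilon>) * measure_pmf.prob M0 (E S))"
    by (rule sum_mono) (rule hS)
  also have "\<dots> = exp (real n * \<epsilon>) * (\<Sum>S\<in>Pow P. measure_pmf.prob M0 (E S))"
    by (simp add: sum_distrib_left)
  also have "(\<Sum>S\<in>Pow P. measure_pmf.prob M0 (E S)) = (\<Sum>S\<in>Pow P. \<Sum>a\<in>?R. indicator (E S) a * pmf M0 a)"
    by (rule sum.cong[OF refl]) (rule prob_sum[OF supp finite_rankings])
  also have "\<dots> = (\<Sum>a\<in>?R. (\<Sum>S\<in>Pow P. indicator (E S) a) * pmf M0 a)"
    by (subst sum.swap) (simp add: sum_distrib_right)
  also have "\<dots> \<le> (\<Sum>a\<in>?R. B * pmf M0 a)"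
  proof (rule sum_mono)
    fix a assume a: "a \<in> ?R"
    have "(\<Sum>S\<in>Pow P. indicator (E S) a) \<le> B"
      using count_bound[OF a] m unfolding E_def B_def P_def p_def by simp
    then show "(\<Sum>S\<in>Pow P. indicator (E S) a) * pmf M0 a \<le> B * pmf M0 a"
      by (rule mult_right_mono) simp
  qed
  also have "\<dots> = B * (\<Sum>a\<in>?R. pmf M0 a)" by (simp add: sum_distrib_left)
  also have "(\<Sum>a\<in>?R. pmf M0 a) = 1" using supp finite_rankings by (rule sum_pmf_eq_1[rotated])
  finally have ineq: "2 ^ p / 2 \<le> exp (real n * \<epsilon>) * B"
    by (simp add: P_def card_Pow)
  have Bpos: "B > 0" by (simp add: B_def)
  have "ln (2 ^ p / 2) \<le> ln (exp (real n * \<epsilon>) * B)"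
    using ineq Bpos by (subst ln_le_cancel_iff) auto
  also have "ln (exp (real n * \<epsilon>) * B) = real n * \<epsilon> + 0.08 * real m * ln 3 + real p * ln (4/3)"
    unfolding B_def by (simp add: ln_mult ln_powr ln_realpow)
  also have "ln (2 ^ p / 2 :: real) = real p * ln 2 - ln 2"
    by (simp add: ln_div ln_realpow)
  finally have L: "real p * ln 2 - ln 2 \<le> real n * \<epsilon> + 0.08 * real m * ln 3 + real p * ln (4/3)" .
  define a where "a = ln (2::real)"
  define b where "b = ln (3/2::real)"
  have l3: "ln (3::real) = a + b" using ln_mult[of 2 "3/2"] by (simp add: a_def b_def)
  have l43: "ln (4/3::real) = a - b" using ln_div[of 2 "3/2"] by (simp add: a_def b_def)
  have a1: "a < 1" "a > 0" by (simp_all add: a_def ln_2_less_1)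
  have b1: "b \<ge> 1/4" using ln_one_plus_pos_lower_bound[of "1/2"] by (simp add: b_def power2_eq_square)
  have mp: "real m \<le> 2 * real p + 1" unfolding p_def by linarith
  have L2: "(real p - 0.08 * real m) * b \<le> a + real n * \<epsilon> + 0.08 * real m * a"
    using L unfolding l3 l43 a_def[symmetric] by (simp add: algebra_simps add_divide_distrib)
  have "(real p - 0.08 * real m) * (1/4) \<le> (real p - 0.08 * real m) * b"
  proof (rule mult_left_mono[OF b1])
    have "real m \<ge> 2" using m by simp
    then show "0 \<le> real p - 0.08 * real m" using mp unfolding power2_eq_square by linarith
  qed
  moreover have "0.08 * real m * a \<le> 0.08 * real m" using a1 by (intro mult_left_le) auto
  moreover have "(real p - 0.08 * real m) * (1/4) = real p / 4 - 0.02 * real m" by simp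
  ultimately show ?thesis using L2 mp a1 unfolding power2_eq_square power3_eq_cube by linarith
qed

theorem theorem5:
  fixes \<alpha> \<epsilon> :: real
  assumes "\<alpha> > 0" and "\<epsilon> > 0"
  shows "\<forall>ms ns :: nat \<Rightarrow> nat.
           filterlim ms at_top sequentially \<longrightarrow>
           (\<forall>k. ns k \<ge> 1) \<longrightarrow>
           ((\<lambda>k. real (ns k) / (real (ms k) / \<epsilon>)) \<longlonglongrightarrow> 0) \<longrightarrow>
           (\<forall>\<^sub>F k in sequentially.
              \<not> (\<exists>A. is_DP (ms k) (ns k) \<epsilon> A \<and>
                     is_approx (ms k) (ns k) \<alpha> (0.01 * real (ms k) ^ 2) A))"
proof (intro allI impI)
  fix ms ns :: "nat \<Rightarrow> nat"
  assume lim: "filterlim ms at_top sequentially" and ns: "\<forall>k. ns k \<ge> 1"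
    and t: "(\<lambda>k. real (ns k) / (real (ms k) / \<epsilon>)) \<longlonglongrightarrow> 0"
  have ev1: "\<forall>\<^sub>F k in sequentially. ms k \<ge> 200"
    using lim by (simp add: filterlim_at_top)
  have ev2: "\<forall>\<^sub>F k in sequentially. real (ns k) / (real (ms k) / \<epsilon>) < 0.01"
    using order_tendstoD(2)[OF t, of "0.01"] by simp
  show "\<forall>\<^sub>F k in sequentially.
              \<not> (\<exists>A. is_DP (ms k) (ns k) \<epsilon> A \<and>
                     is_approx (ms k) (ns k) \<alpha> (0.01 * real (ms k) ^ 2) A)"
    using ev1 ev2
  proof eventually_elim
    case (elim k)
    show ?case
    proof
      assume "\<exists>A. is_DP (ms k) (ns k) \<epsilon> A \<and> is_approx (ms k) (ns k) \<alpha> (0.01 * real (ms k) ^ 2) A"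
      then obtain A where "is_DP (ms k) (ns k) \<epsilon> A" "is_approx (ms k) (ns k) \<alpha> (0.01 * real (ms k) ^ 2) A"
        by blast
      then have b: "0.025 * real (ms k) - 2 \<le> real (ns k) * \<epsilon>"
        using main_bound[of "ms k" "ns k" \<epsilon>] elim ns assms by auto
      have mpos: "real (ms k) > 0" using elim by simp
      have "real (ns k) / (real (ms k) / \<epsilon>) = real (ns k) * \<epsilon> / real (ms k)" by simp
      then have "real (ns k) * \<epsilon> < 0.01 * real (ms k)" using elim mpos by (simp add: divide_less_eq)
      moreover have "real (ms k) \<ge> 200" using elim by simp
      ultimately show False using b unfolding power2_eq_square power3_eq_cube by linarith
    qed
  qed
qed

end
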